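(* Let $0<\lambda\le1$ and $f\in\mathcal U(\lambda)$ with $\dfrac{z}{f(z)}=1+\sum_{k=1}^\infty b_kz^k$ in $\mathbb D$. Let $n\ge2$ be an integer and define $f_n$ by $$\frac{z}{f_n(z)}=1+\sum_{k=1}^\infty b_{nk}z^{nk},\qquad z\in\mathbb D.$$ If $z/f_n(z)\ne0$ for all $z\in\mathbb D$, then $f_n\in\mathcal U(\lambda)$.
   Context: $\mathbb D=\{z\in\mathbb C:|z|<1\}$. $\mathcal A$ is the class of functions $f$ analytic in $\mathbb D$ with $f(z)=z+\sum_{k\ge2}a_kz^k$. For $f\in\mathcal A$ with $f(z)\ne0$ for $z\in\mathbb D\setminus\{0\}$, set $U_f(z)=\left(\frac{z}{f(z)}\right)^2f'(z)-1$. For $0<\lambda\le1$, $\mathcal U(\lambda)$ is the class of such $f\in\mathcal A$ with $|U_f(z)|<\lambda$ for all $z\in\mathbb D$. *)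

theory Defs
  imports "HOL-Complex_Analysis.Complex_Analysis"
begin

definition classA :: "(complex \<Rightarrow> complex) \<Rightarrow> bool" where
  "classA f \<longleftrightarrow> f holomorphic_on ball 0 1 \<and> f 0 = 0 \<and> deriv f 0 = 1"

text \<open>z / f(z), extended to z = 0 by its limit 1 / f'(0) (= 1 for f in class A).\<close>
definition zdivf :: "(complex \<Rightarrow> complex) \<Rightarrow> complex \<Rightarrow> complex" where
  "zdivf f z = (if z = 0 then 1 / deriv f 0 else z / f z)"

definition Uf :: "(complex \<Rightarrow> complex) \<Rightarrow> complex \<Rightarrow> complex" where
  "Uf f z = (zdivf f z)\<^sup>2 * deriv f z - 1"

definition classU :: "real \<Rightarrow> (complex \<Rightarrow> complex) \<Rightarrow> bool" where
  "classU lam f \<longleftrightarrow> classA f \<and> (\<forall>z\<in>ball 0 1 - {0}. f z \<noteq> 0)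
     \<and> (\<forall>z\<in>ball 0 1. cmod (Uf f z) < lam)"

definition bcoeff :: "(complex \<Rightarrow> complex) \<Rightarrow> nat \<Rightarrow> complex" where
  "bcoeff f k = (deriv ^^ k) (zdivf f) 0 / fact k"

end

theory Submission
  imports Defs
begin

lemma root_sum:
  fixes n m :: nat
  assumes "n \<ge> 1"
  defines "\<omega> \<equiv> exp (2 * of_real pi * \<i> / of_nat n)"
  shows "(\<Sum>j<n. (\<omega>^j)^m) = (if n dvd m then of_nat n else 0)"
proof -
  have pw: "\<omega>^k = exp(2 * of_real pi * \<i> * of_nat k / of_nat n)" for k
    unfolding \<omega>_def by (simp add: exp_of_nat_mult[symmetric] algebra_simps)
  have e: "\<omega>^k = 1 \<longleftrightarrow> n dvd k" for k using pw complex_root_unity_eq_1[OF \<open>n \<ge> 1\<close>] by simp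
  have "(\<Sum>j<n. (\<omega>^j)^m) = (\<Sum>j<n. (\<omega>^m)^j)" by (simp add: power_mult[symmetric] mult.commute)
  also have "... = (if n dvd m then of_nat n else 0)"
  proof (cases "n dvd m")
    case True
    have "\<omega>^m = 1" using e True by simp
    then show ?thesis using True by simp
  next
    case False
    have "(\<omega>^m)^n = 1" by (metis e dvd_refl power_mult mult.commute power_one)
    then show ?thesis using False e sum_gp_strict[of "\<omega>^m" n] by simp
  qed
  finally show ?thesis .
qed

lemma recip_part:
  fixes G :: "complex \<Rightarrow> complex"
  assumes hol: "G holomorphic_on ball 0 1" and nz: "\<forall>z\<in>ball 0 1. G z \<noteq> 0" and G0: "G 0 = 1"
  shows "classA (\<lambda>z. z / G z)" and "\<forall>z\<in>ball 0 1 - {0}. z / G z \<noteq> 0"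
    and "\<And>z. z \<in> ball 0 1 \<Longrightarrow> Uf (\<lambda>z. z / G z) z = G z - z * deriv G z - 1"
proof -
  have dF: "deriv (\<lambda>z. z / G z) z = (G z - z * deriv G z) / (G z * G z)" if z: "z \<in> ball 0 1" for z
  proof -
    have "(G has_field_derivative deriv G z) (at z)"
      using holomorphic_derivI[OF hol open_ball z] .
    then have "((\<lambda>z. z / G z) has_field_derivative (1 * G z - z * deriv G z) / (G z * G z)) (at z)"
      using nz z by (intro DERIV_divide DERIV_ident) auto
    then show ?thesis by (simp add: DERIV_imp_deriv)
  qed
  have d0: "deriv (\<lambda>z. z / G z) 0 = 1" using dF[of 0] G0 by simp
  show "classA (\<lambda>z. z / G z)" unfolding classA_def
    using d0 nz by (auto intro!: holomorphic_intros hol)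
  show "\<forall>z\<in>ball 0 1 - {0}. z / G z \<noteq> 0" using nz by auto
  fix z :: complex assume z: "z \<in> ball 0 1"
  have zd: "zdivf (\<lambda>z. z / G z) z = G z"
    using d0 G0 nz z by (auto simp: zdivf_def)
  show "Uf (\<lambda>z. z / G z) z = G z - z * deriv G z - 1"
    unfolding Uf_def zd dF[OF z] using nz z by (simp add: field_simps power2_eq_square)
qed

lemma classU_g:
  assumes "classU lam f"
  shows "zdivf f holomorphic_on ball 0 1" and "zdivf f 0 = 1"
   and "\<And>w. w \<in> ball 0 1 \<Longrightarrow> Uf f w = zdivf f w - w * deriv (zdivf f) w - 1"
proof -
  have hf: "f holomorphic_on ball 0 1" and f0: "f 0 = 0" and df0: "deriv f 0 = 1"
    and nz: "\<forall>z\<in>ball 0 1 - {0}. f z \<noteq> 0"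
    using assms by (auto simp: classU_def classA_def)
  show g0: "zdivf f 0 = 1" by (simp add: zdivf_def df0)
  have h1: "(\<lambda>z. z / f z) holomorphic_on (ball 0 1 - {0})"
    using nz by (intro holomorphic_intros holomorphic_on_subset[OF hf]) auto
  have h2: "zdivf f holomorphic_on (ball 0 1 - {0})"
    by (rule holomorphic_transform[OF h1]) (auto simp: zdivf_def)
  have "(f has_field_derivative 1) (at 0)"
    using holomorphic_derivI[OF hf open_ball, of 0] df0 by simp
  then have "((\<lambda>y. (f y - f 0) / (y - 0)) \<longlongrightarrow> 1) (at 0)"
    by (simp add: has_field_derivative_iff)
  then have "((\<lambda>y. inverse (f y / y)) \<longlongrightarrow> inverse 1) (at 0)"
    using f0 by (intro tendsto_inverse) auto
  then have lim: "((\<lambda>y. y / f y) \<longlongrightarrow> 1) (at 0)" by simp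
  have ev: "eventually (\<lambda>y. y / f y = zdivf f y) (at 0)"
    by (auto simp: eventually_at_filter zdivf_def)
  have "(zdivf f \<longlongrightarrow> 1) (at 0)"
    using tendsto_cong[OF ev] lim by (rule iffD1)
  then have "(zdivf f \<longlongrightarrow> zdivf f 0) (at 0)" by (simp add: g0)
  then have "(zdivf f \<longlongrightarrow> zdivf f 0) (at 0 within ball 0 1)"
    by (rule Lim_at_imp_Lim_at_within)
  note c0 = this
  show hg: "zdivf f holomorphic_on ball 0 1"
    by (rule no_isolated_singularity'[where K="{0}", OF _ h2]) (use c0 in auto)
  fix w :: complex assume w: "w \<in> ball 0 1"
  show "Uf f w = zdivf f w - w * deriv (zdivf f) w - 1"
  proof (cases "w = 0")
    case True then show ?thesis by (simp add: Uf_def g0 df0)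
  next
    case False
    have fw: "f w \<noteq> 0" using nz w False by auto
    have "(f has_field_derivative deriv f w) (at w)"
      using holomorphic_derivI[OF hf open_ball w] .
    then have "((\<lambda>z. z / f z) has_field_derivative (1 * f w - w * deriv f w) / (f w * f w)) (at w)"
      using fw by (intro DERIV_divide DERIV_ident) auto
    then have "(zdivf f has_field_derivative (1 * f w - w * deriv f w) / (f w * f w)) (at w)"
      by (rule has_field_derivative_transform_within_open[of _ _ _ "ball 0 1 - {0}"])
         (use w False in \<open>auto simp: zdivf_def\<close>)
    then have dd: "deriv (zdivf f) w = (1 * f w - w * deriv f w) / (f w * f w)"
      by (simp add: DERIV_imp_deriv)
    have zz: "zdivf f w = w / f w" using False by (simp add: zdivf_def)
    show ?thesis unfolding Uf_def dd zz using False fw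
      by (simp add: field_simps power2_eq_square)
  qed
qed


theorem theorem5p3:
  fixes lam :: real and f :: "complex \<Rightarrow> complex" and n :: nat
  assumes "0 < lam" and "lam \<le> 1"
    and "classU lam f"
    and "n \<ge> 2"
    and "\<forall>z\<in>ball 0 1. 1 + (\<Sum>k. bcoeff f (n * Suc k) * z ^ (n * Suc k)) \<noteq> 0"
  shows "classU lam (\<lambda>z. z / (1 + (\<Sum>k. bcoeff f (n * Suc k) * z ^ (n * Suc k))))"
proof -
  define g where "g = zdivf f"
  define h where "h = (\<lambda>z. 1 + (\<Sum>k. bcoeff f (n * Suc k) * z ^ (n * Suc k)))"
  define \<omega> where "\<omega> = exp (2 * of_real pi * \<i> / of_nat n)"
  define H where "H = (\<lambda>z. (1 / of_nat n) * (\<Sum>j<n. g (\<omega>^j * z)))"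
  define H' where "H' = (\<lambda>z. (1 / of_nat n) * (\<Sum>j<n. deriv g (\<omega>^j * z) * \<omega>^j))"
  have n1: "n \<ge> 1" and n0: "n > 0" using assms(4) by auto
  have hg: "g holomorphic_on ball 0 1" and g0: "g 0 = 1"
    and Ug: "\<And>w. w \<in> ball 0 1 \<Longrightarrow> Uf f w = g w - w * deriv g w - 1"
    using classU_g[OF assms(3)] unfolding g_def by auto
  have nw: "norm \<omega> = 1" unfolding \<omega>_def by (simp add: norm_exp_eq_Re)
  have inb: "\<omega>^j * z \<in> ball 0 1" if "z \<in> ball 0 1" for j z
    using that nw by (simp add: norm_mult norm_power)
  have b0: "bcoeff f 0 = 1" by (simp add: bcoeff_def g0[unfolded g_def])
  have ser: "(\<lambda>m. bcoeff f m * w^m) sums g w" if "w \<in> ball 0 1" for w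
    using holomorphic_power_series[OF hg that] by (simp add: bcoeff_def g_def)
  have hH: "h z = H z" if z: "z \<in> ball 0 1" for z
  proof -
    define a where "a = (\<lambda>m. if n dvd m then bcoeff f m * z^m else 0)"
    have "(\<lambda>m. (1 / of_nat n) * (\<Sum>j<n. bcoeff f m * (\<omega>^j * z)^m)) sums H z"
      unfolding H_def by (intro sums_mult sums_sum ser inb z)
    moreover have "(1 / of_nat n) * (\<Sum>j<n. bcoeff f m * (\<omega>^j * z)^m) = a m" for m
    proof -
      have "(\<Sum>j<n. bcoeff f m * (\<omega>^j * z)^m) = bcoeff f m * z^m * (\<Sum>j<n. (\<omega>^j)^m)"
        by (simp add: sum_distrib_left power_mult_distrib algebra_simps)
      then show ?thesis using root_sum[OF n1, of m, folded \<omega>_def] n0 by (simp add: a_def)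
    qed
    ultimately have "a sums H z" by simp
    then have "(\<lambda>k. a (n * k)) sums H z"
      by (subst sums_mono_reindex) (auto simp: strict_mono_def a_def n0)
    then have "(\<lambda>k. bcoeff f (n*k) * z^(n*k)) sums H z" by (simp add: a_def)
    then have "(\<lambda>k. bcoeff f (n * Suc k) * z^(n * Suc k)) sums (H z - 1)"
      using sums_Suc_iff[of "\<lambda>k. bcoeff f (n*k) * z^(n*k)" "H z - 1"] b0 by simp
    then show ?thesis unfolding h_def by (simp add: sums_iff)
  qed
  have dH: "(H has_field_derivative H' z) (at z)" if z: "z \<in> ball 0 1" for z
  proof -
    have "((\<lambda>z. g (\<omega>^j * z)) has_field_derivative deriv g (\<omega>^j * z) * \<omega>^j) (at z)" for j
    proof -
      have d1: "(g has_field_derivative deriv g (\<omega>^j * z)) (at (\<omega>^j * z))"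
        using holomorphic_derivI[OF hg open_ball inb[OF z]] .
      have d2: "((\<lambda>z. \<omega>^j * z) has_field_derivative \<omega>^j) (at z)"
        by (auto intro!: derivative_eq_intros)
      show ?thesis using DERIV_chain2[OF d1 d2] .
    qed
    then have "((\<lambda>z. \<Sum>j<n. g (\<omega>^j * z)) has_field_derivative (\<Sum>j<n. deriv g (\<omega>^j * z) * \<omega>^j)) (at z)"
      by (intro DERIV_sum) auto
    then show ?thesis unfolding H_def H'_def
      by (rule DERIV_cmult)
  qed
  have dh: "(h has_field_derivative H' z) (at z)" if z: "z \<in> ball 0 1" for z
    by (rule has_field_derivative_transform_within_open[OF dH[OF z] open_ball z]) (simp add: hH)
  have hh: "h holomorphic_on ball 0 1"
    unfolding holomorphic_on_open[OF open_ball] using dh by blast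
  have h0: "h 0 = 1" using hH[of 0] g0 n0 by (simp add: H_def)
  have hnz: "\<forall>z\<in>ball 0 1. h z \<noteq> 0" using assms(5) h_def by simp
  note R = recip_part[OF hh hnz h0]
  have U: "cmod (Uf (\<lambda>z. z / h z) z) < lam" if z: "z \<in> ball 0 1" for z
  proof -
    have "Uf (\<lambda>z. z / h z) z = h z - z * deriv h z - 1" using R(3)[OF z] .
    also have "\<dots> = H z - z * H' z - 1" using hH[OF z] DERIV_imp_deriv[OF dh[OF z]] by simp
    also have "\<dots> = (1 / of_nat n) * (\<Sum>j<n. Uf f (\<omega>^j * z))"
    proof -
      have "(\<Sum>j<n. Uf f (\<omega>^j * z)) = (\<Sum>j<n. g (\<omega>^j * z) - (\<omega>^j * z) * deriv g (\<omega>^j * z) - 1)"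
        by (intro sum.cong refl Ug inb z)
      also have "\<dots> = (\<Sum>j<n. g (\<omega>^j * z)) - z * (\<Sum>j<n. deriv g (\<omega>^j * z) * \<omega>^j) - of_nat n"
        by (simp add: sum_subtractf sum_distrib_left sum.distrib algebra_simps)
      finally show ?thesis unfolding H_def H'_def using n0 by (simp add: field_simps)
    qed
    also have "cmod \<dots> \<le> (1 / real n) * (\<Sum>j<n. cmod (Uf f (\<omega>^j * z)))"
      by (simp add: norm_mult norm_divide divide_right_mono norm_sum)
    also have "\<dots> < (1 / real n) * (\<Sum>j<n. lam)"
    proof -
      have "(\<Sum>j<n. cmod (Uf f (\<omega>^j * z))) < (\<Sum>j<n. lam)"
        using assms(3) inb[OF z] n0 by (intro sum_strict_mono) (auto simp: classU_def)
      then show ?thesis using n0 by (simp add: pos_divide_less_eq mult.commute)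
    qed
    also have "\<dots> = lam" using n0 by simp
    finally show ?thesis .
  qed
  show ?thesis
    using R(1,2) U unfolding h_def classU_def by auto
qed

end
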